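(* Let $r\in[0,\tfrac12]$. For every family of projective measurements $\{M_{a|x}\}_{a,x}$ on Alice's qubit, the assemblage generated from the Werner state $\omega_r$ by this family admits an LHS model of size $N(r)$ (whenever $N(r)<\infty$). Moreover, $\gamma(\omega_r)\ge N(r)$.
   Context: Notation: $\vec\sigma=(\sigma_x,\sigma_y,\sigma_z)$ is the vector of Pauli matrices, $\mathbb{I}$ the identity. A qubit POVM is a finite family $\{\Pi_i\}_{i=1}^n$ of positive semidefinite $2\times2$ operators summing to $\mathbb{I}$ (an "$n$-outcome POVM"). A POVM $\{\Pi_i\}_{i=1}^n$ simulates a family of POVMs $\{M_{a|x}\}_{a,x}$ if there exist numbers $p(a|x,i)\ge0$ with $\sum_a p(a|x,i)=1$ such that $M_{a|x}=\sum_{i=1}^n p(a|x,i)\Pi_i$ for all $a,x$. For $r\in[0,1]$, $\mathcal{P}_r$ is the family of all two-outcome POVMs $\{M_{+|r\hat n},M_{-|r\hat n}\}$, $M_{\pm|r\hat n}=\tfrac12(\mathbb{I}\pm r\,\hat n\cdot\vec\sigma)$, over all unit vectors $\hat n\in\mathbb{R}^3$. $N(r)$ is the smallest $n$ such that some $n$-outcome qubit POVM simulates $\mathcal{P}_r$ ($N(r)=+\infty$ if none exists). The two-qubit Werner state is $\omega_r=r|\Psi^-\rangle\langle\Psi^-|+(1-r)\mathbb{I}\otimes\mathbb{I}/4$ with $|\Psi^-\rangle=(|01\rangle-|10\rangle)/\sqrt2$. Given a bipartite state $\rho_{AB}$ and a family of POVMs $\{M_{a|x}\}$ on $A$ (arbitrary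 input set, finitely many outcomes each), the generated assemblage is $\sigma_{a|x}=\mathrm{Tr}_A[(M_{a|x}\otimes\mathbb{I})\rho_{AB}]$. An LHS model of size $n$ for it consists of a probability distribution $p(i)$ on $\{1,\dots,n\}$, states $\rho_i$ on $B$, and conditional probabilities $p(a|x,i)$ with $\sigma_{a|x}=\sum_{i=1}^n p(a|x,i)p(i)\rho_i$ for all $a,x$. $\gamma(\rho_{AB})\in\{1,2,\dots\}\cup\{+\infty\}$ is the smallest $n$ such that every assemblage generated from $\rho_{AB}$ by any family of POVMs on $A$ admits an LHS model of size $n$. *)

theory Defs
  imports "HOL-Analysis.Analysis" "HOL-Library.Extended_Nat"
begin

text \<open>A qubit operator is
  indexed by bool (False = |0>, True = |1>); a two-qubit operator by bool \<times> bool,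
  where the first component is Alice's qubit A and the second Bob's qubit B.\<close>

type_synonym 'i op = "'i \<Rightarrow> 'i \<Rightarrow> complex"
type_synonym qop = "bool op"
type_synonym qop2 = "(bool \<times> bool) op"

definition idop :: "('i::finite) op" where
  "idop = (\<lambda>i j. if i = j then 1 else 0)"

definition opadd :: "('i::finite) op \<Rightarrow> 'i op \<Rightarrow> 'i op" where
  "opadd A B = (\<lambda>i j. A i j + B i j)"

definition opscale :: "complex \<Rightarrow> ('i::finite) op \<Rightarrow> 'i op" where
  "opscale c A = (\<lambda>i j. c * A i j)"

definition opmult :: "('i::finite) op \<Rightarrow> 'i op \<Rightarrow> 'i op" where
  "opmult A B = (\<lambda>i j. \<Sum>l\<in>UNIV. A i l * B l j)"

definition optrace :: "('i::finite) op \<Rightarrow> complex" where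
  "optrace A = (\<Sum>i\<in>UNIV. A i i)"

definition psd :: "('i::finite) op \<Rightarrow> bool" where
  "psd A \<longleftrightarrow> (\<forall>v :: 'i \<Rightarrow> complex.
      (\<Sum>i\<in>UNIV. \<Sum>j\<in>UNIV. cnj (v i) * A i j * v j) \<in> \<real> \<and>
      0 \<le> Re (\<Sum>i\<in>UNIV. \<Sum>j\<in>UNIV. cnj (v i) * A i j * v j))"

definition is_state :: "('i::finite) op \<Rightarrow> bool" where
  "is_state \<rho> \<longleftrightarrow> psd \<rho> \<and> optrace \<rho> = 1"

definition tensor :: "qop \<Rightarrow> qop \<Rightarrow> qop2" where
  "tensor A B = (\<lambda>(i, j) (i', j'). A i i' * B j j')"

definition ptrace_A :: "qop2 \<Rightarrow> qop" where
  "ptrace_A X = (\<lambda>j j'. \<Sum>i\<in>UNIV. X (i, j) (i, j'))"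

definition sigma_x :: qop where
  "sigma_x = (\<lambda>i j. if i \<noteq> j then 1 else 0)"

definition sigma_y :: qop where
  "sigma_y = (\<lambda>i j. if i = False \<and> j = True then - \<i>
                    else if i = True \<and> j = False then \<i> else 0)"

definition sigma_z :: qop where
  "sigma_z = (\<lambda>i j. if i = j then (if i then -1 else 1) else 0)"

definition ndotsigma :: "real^3 \<Rightarrow> qop" where
  "ndotsigma n = (\<lambda>i j. complex_of_real (n$1) * sigma_x i j
                      + complex_of_real (n$2) * sigma_y i j
                      + complex_of_real (n$3) * sigma_z i j)"

definition is_povm :: "nat \<Rightarrow> (nat \<Rightarrow> ('i::finite) op) \<Rightarrow> bool" where
  "is_povm n P \<longleftrightarrow> (\<forall>i<n. psd (P i)) \<and> (\<lambda>a b. \<Sum>i<n. P i a b) = idop"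

definition povm_family :: "'x set \<Rightarrow> ('x \<Rightarrow> nat) \<Rightarrow> ('x \<Rightarrow> nat \<Rightarrow> qop) \<Rightarrow> bool" where
  "povm_family X k M \<longleftrightarrow> (\<forall>x\<in>X. is_povm (k x) (M x))"

definition projective_family :: "'x set \<Rightarrow> ('x \<Rightarrow> nat) \<Rightarrow> ('x \<Rightarrow> nat \<Rightarrow> qop) \<Rightarrow> bool" where
  "projective_family X k M \<longleftrightarrow> povm_family X k M \<and>
     (\<forall>x\<in>X. \<forall>a<k x. opmult (M x a) (M x a) = M x a)"

text \<open>M_{+-|r n} = (I +- r n.sigma)/2; True encodes +, False encodes -.\<close>
definition Pr_elem :: "real \<Rightarrow> real^3 \<Rightarrow> bool \<Rightarrow> qop" where
  "Pr_elem r n s = (\<lambda>i j. (idop i j + (if s then 1 else -1) * complex_of_real r * ndotsigma n i j) / 2)"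

definition simulates_Pr :: "real \<Rightarrow> nat \<Rightarrow> (nat \<Rightarrow> qop) \<Rightarrow> bool" where
  "simulates_Pr r n Pv \<longleftrightarrow> is_povm n Pv \<and>
     (\<exists>p :: real^3 \<Rightarrow> bool \<Rightarrow> nat \<Rightarrow> real.
        \<forall>m::real^3. norm m = 1 \<longrightarrow>
          (\<forall>i<n. (\<forall>s. 0 \<le> p m s i) \<and> p m True i + p m False i = 1) \<and>
          (\<forall>s. Pr_elem r m s = (\<lambda>a b. \<Sum>i<n. complex_of_real (p m s i) * Pv i a b)))"

text \<open>N(r) in enat; Inf of the empty set is infinity.\<close>
definition N_sim :: "real \<Rightarrow> enat" where
  "N_sim r = (INF n\<in>{n. n \<ge> 1 \<and> (\<exists>Pv. simulates_Pr r n Pv)}. enat n)"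

definition psi_minus :: "bool \<times> bool \<Rightarrow> complex" where
  "psi_minus = (\<lambda>(i, j). if \<not> i \<and> j then 1 / sqrt 2
                         else if i \<and> \<not> j then - 1 / sqrt 2 else 0)"

definition werner :: "real \<Rightarrow> qop2" where
  "werner r = (\<lambda>u v. complex_of_real r * (psi_minus u * cnj (psi_minus v))
                     + complex_of_real (1 - r) * idop u v / 4)"

definition assemblage :: "qop2 \<Rightarrow> ('x \<Rightarrow> nat \<Rightarrow> qop) \<Rightarrow> 'x \<Rightarrow> nat \<Rightarrow> qop" where
  "assemblage \<rho> M x a = ptrace_A (opmult (tensor (M x a) idop) \<rho>)"

definition has_LHS_model :: "qop2 \<Rightarrow> 'x set \<Rightarrow> ('x \<Rightarrow> nat) \<Rightarrow> ('x \<Rightarrow> nat \<Rightarrow> qop) \<Rightarrow> nat \<Rightarrow> bool" where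
  "has_LHS_model \<rho> X k M n \<longleftrightarrow>
     (\<exists>(p :: nat \<Rightarrow> real) (\<rho>B :: nat \<Rightarrow> qop) (q :: 'x \<Rightarrow> nat \<Rightarrow> nat \<Rightarrow> real).
        (\<forall>i<n. 0 \<le> p i) \<and> (\<Sum>i<n. p i) = 1 \<and>
        (\<forall>i<n. is_state (\<rho>B i)) \<and>
        (\<forall>x\<in>X. \<forall>i<n. (\<forall>a<k x. 0 \<le> q x a i) \<and> (\<Sum>a<k x. q x a i) = 1) \<and>
        (\<forall>x\<in>X. \<forall>a<k x. assemblage \<rho> M x a =
            (\<lambda>b b'. \<Sum>i<n. complex_of_real (q x a i * p i) * \<rho>B i b b')))"

text \<open>Inputs are indexed by the type nat \<times> (nat \<Rightarrow> qop): an input can be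
  taken to be the POVM (k, M) itself, so an arbitrary input set X of this type
  covers every family of POVMs up to repetition of inputs (which does not affect
  the existence of LHS models).\<close>
definition gamma :: "qop2 \<Rightarrow> enat" where
  "gamma \<rho> = (INF n\<in>{n. n \<ge> 1 \<and>
       (\<forall>(X :: (nat \<times> (nat \<Rightarrow> qop)) set) k M. povm_family X k M \<longrightarrow> has_LHS_model \<rho> X k M n)}.
     enat n)"

end

theory Submission imports Defs begin
lemma sum_bool2: "(\<Sum>l\<in>(UNIV::(bool\<times>bool) set). f l) = f (False,False) + f (False,True) + f (True,False) + f (True,True)"
proof -
  have U: "(UNIV::(bool\<times>bool) set) = {(False,False),(False,True),(True,False),(True,True)}" by auto
  have "(\<Sum>l\<in>(UNIV::(bool\<times>bool) set). f l) = (\<Sum>l\<in>{(False,False),(False,True),(True,False),(True,True)}. f l)"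
    by (simp only: U)
  thus ?thesis by (simp add: add.assoc)
qed
lemma sum_bool: "(\<Sum>l\<in>(UNIV::bool set). f l) = f False + f True"
  by (simp add: UNIV_bool)
definition ee :: "bool\<times>bool \<Rightarrow> complex" where
  "ee = (\<lambda>(i, j). if \<not> i \<and> j then 1 else if i \<and> \<not> j then - 1 else 0)"
lemma psi_ee: "psi_minus u = complex_of_real (1 / sqrt 2) * ee u"
  unfolding psi_minus_def ee_def by (auto split: prod.splits)
lemma inv_sq2: "complex_of_real (1 / sqrt 2) * complex_of_real (1 / sqrt 2) = 1/2"
proof -
  have "(1/sqrt 2) * (1/sqrt 2) = (1/2::real)" by simp
  thus ?thesis by (simp flip: of_real_mult)
qed
lemma werner_ee: "werner r u v = complex_of_real r / 2 * ee u * ee v + complex_of_real (1 - r) * idop u v / 4"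
proof -
  have "psi_minus u * cnj (psi_minus v) = (complex_of_real (1 / sqrt 2) * complex_of_real (1 / sqrt 2)) * (ee u * cnj (ee v))"
    by (simp add: psi_ee)
  also have "cnj (ee v) = ee v" by (simp add: ee_def split: prod.splits)
  finally have "psi_minus u * cnj (psi_minus v) = 1/2 * (ee u * ee v)" unfolding inv_sq2 .
  thus ?thesis unfolding werner_def by (simp add: mult.assoc)
qed
definition Wop :: "real \<Rightarrow> qop \<Rightarrow> qop" where
 "Wop r P = ptrace_A (opmult (tensor P idop) (werner r))"
lemma Wop_entries:
  "Wop r P j j' = complex_of_real r / 2 * (if j then 1 else -1) * (if j' then 1 else -1) * P (\<not> j') (\<not> j)
     + complex_of_real (1 - r) / 4 * (P False False + P True True) * (if j = j' then 1 else 0)"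
  unfolding Wop_def ptrace_A_def opmult_def tensor_def werner_ee idop_def ee_def
  by (cases j; cases j'; simp add: sum_bool2 sum_bool field_simps)
definition herm :: "qop \<Rightarrow> bool" where "herm A \<longleftrightarrow> (\<forall>i j. A j i = cnj (A i j))"

lemma psd_diag: assumes "psd (A::qop)" shows "A i i \<in> \<real>" "0 \<le> Re (A i i)"
proof -
  let ?v = "\<lambda>j::bool. if j = i then 1 else (0::complex)"
  have e: "(\<Sum>k\<in>UNIV. \<Sum>j\<in>UNIV. cnj (?v k) * A k j * ?v j) = A i i"
    by (cases i; simp add: sum_bool)
  have all: "\<forall>v :: bool \<Rightarrow> complex. (\<Sum>k\<in>UNIV. \<Sum>j\<in>UNIV. cnj (v k) * A k j * v j) \<in> \<real> \<and>
      0 \<le> Re (\<Sum>k\<in>UNIV. \<Sum>j\<in>UNIV. cnj (v k) * A k j * v j)" using assms unfolding psd_def by blast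
  from spec[OF all, of ?v] have "A i i \<in> \<real> \<and> 0 \<le> Re (A i i)" by (simp only: e)
  thus "A i i \<in> \<real>" "0 \<le> Re (A i i)" by simp_all
qed

lemma psd_herm: assumes "psd (A::qop)" shows "herm A"
proof -
  let ?v1 = "\<lambda>j::bool. (1::complex)"
  let ?v2 = "\<lambda>j::bool. if j then \<i> else (1::complex)"
  have r1: "(\<Sum>k\<in>UNIV. \<Sum>j\<in>UNIV. cnj (?v1 k) * A k j * ?v1 j) \<in> \<real>" using assms unfolding psd_def by (rule allE[where x="?v1"]) simp
  have r2: "(\<Sum>k\<in>UNIV. \<Sum>j\<in>UNIV. cnj (?v2 k) * A k j * ?v2 j) \<in> \<real>" using assms unfolding psd_def by (rule allE[where x="?v2"]) simp
  have a: "Im (A False False) = 0" "Im (A True True) = 0" using psd_diag[OF assms] by (auto simp: complex_is_Real_iff)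
  from r1 r2 a have "Im (A False True + A True False) = 0" "Re (A False True - A True False) = 0"
    by (auto simp: sum_bool complex_is_Real_iff algebra_simps)
  hence "A True False = cnj (A False True)" by (simp add: complex_eq_iff)
  hence "A False True = cnj (A True False)" by simp
  moreover have "A b b = cnj (A b b)" for b using a by (cases b) (auto simp: complex_eq_iff)
  ultimately show ?thesis unfolding herm_def
    by (metis \<open>A True False = cnj (A False True)\<close>)
qed

lemma proj_psd: assumes h: "herm (P::qop)" and i: "opmult P P = P" shows "psd P"
proof -
  have Pe: "P i j = (\<Sum>l\<in>UNIV. cnj (P l i) * P l j)" for i j
  proof -
    have "P i j = opmult P P i j" using i by simp
    also have "\<dots> = (\<Sum>l\<in>UNIV. cnj (P l i) * P l j)" unfolding opmult_def using h herm_def by metis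
    finally show ?thesis .
  qed
  show ?thesis unfolding psd_def
  proof
    fix v :: "bool \<Rightarrow> complex"
    define w where "w l = (\<Sum>j\<in>UNIV. P l j * v j)" for l
    have "(\<Sum>i\<in>UNIV. \<Sum>j\<in>UNIV. cnj (v i) * P i j * v j) = (\<Sum>l\<in>UNIV. w l * cnj (w l))"
      apply (subst Pe) unfolding w_def by (simp add: sum_bool algebra_simps)
    also have "\<dots> = of_real (\<Sum>l\<in>UNIV. (norm (w l))^2)"
    proof -
      have "w l * cnj (w l) = of_real ((norm (w l))^2)" for l by (metis complex_norm_square)
      thus ?thesis by (simp add: of_real_sum del: of_real_power)
    qed
    finally show "(\<Sum>i\<in>UNIV. \<Sum>j\<in>UNIV. cnj (v i) * P i j * v j) \<in> \<real> \<and>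
      0 \<le> Re (\<Sum>i\<in>UNIV. \<Sum>j\<in>UNIV. cnj (v i) * P i j * v j)" by (simp add: sum_nonneg)
  qed
qed

lemma psd_scale: assumes "psd (A::qop)" "0 \<le> c" shows "psd (\<lambda>i j. complex_of_real c * A i j)"
  unfolding psd_def
proof
  fix v :: "bool \<Rightarrow> complex"
  have e: "(\<Sum>i\<in>UNIV. \<Sum>j\<in>UNIV. cnj (v i) * (complex_of_real c * A i j) * v j) = complex_of_real c * (\<Sum>i\<in>UNIV. \<Sum>j\<in>UNIV. cnj (v i) * A i j * v j)"
    by (simp add: sum_distrib_left algebra_simps)
  have "(\<Sum>i\<in>UNIV. \<Sum>j\<in>UNIV. cnj (v i) * A i j * v j) \<in> \<real>" "0 \<le> Re (\<Sum>i\<in>UNIV. \<Sum>j\<in>UNIV. cnj (v i) * A i j * v j)"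
    using assms(1) psd_def by blast+
  then show "(\<Sum>i\<in>UNIV. \<Sum>j\<in>UNIV. cnj (v i) * (complex_of_real c * A i j) * v j) \<in> \<real> \<and>
      0 \<le> Re (\<Sum>i\<in>UNIV. \<Sum>j\<in>UNIV. cnj (v i) * (complex_of_real c * A i j) * v j)"
    unfolding e using assms(2) by (auto simp: complex_is_Real_iff)
qed

lemma psd_trace0: assumes "psd (A::qop)" "A False False + A True True = 0" shows "A i j = 0"
proof -
  have d: "Re (A False False) = 0" "Re (A True True) = 0" "Im (A False False) = 0" "Im (A True True) = 0"
    using psd_diag(2)[OF assms(1), of False] psd_diag(2)[OF assms(1), of True]
      psd_diag(1)[OF assms(1), of False] psd_diag(1)[OF assms(1), of True] assms(2)
    by (auto simp: complex_is_Real_iff complex_eq_iff)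
  hence d0: "A False False = 0" "A True True = 0" by (auto simp: complex_eq_iff)
  have h: "A True False = cnj (A False True)" using psd_herm[OF assms(1)] herm_def by metis
  let ?v = "\<lambda>j::bool. if j then - cnj (A False True) else 1"
  have "0 \<le> Re (\<Sum>k\<in>UNIV. \<Sum>j\<in>UNIV. cnj (?v k) * A k j * ?v j)"
    using assms(1) unfolding psd_def by (rule allE[where x="?v"]) simp
  hence "Re (A False True) * Re (A False True) + Im (A False True) * Im (A False True) \<le> 0" using d0 h
    by (simp add: sum_bool algebra_simps)
  hence "A False True = 0" by (simp add: sum_squares_le_zero_iff complex_eq_iff)
  with d0 h show ?thesis by (cases i; cases j; simp)
qed
definition mvec :: "qop \<Rightarrow> real^3" where
  "mvec P = vector [2 * Re (P False True), - 2 * Im (P False True), 2 * Re (P False False) - 1]"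

lemma norm3: "norm (m::real^3) = sqrt ((m$1)^2 + (m$2)^2 + (m$3)^2)"
  by (simp add: norm_vec_def L2_set_def sum_3)

lemma herm_decomp: assumes "herm (P::qop)"
  obtains a d x y where "P False False = complex_of_real a" "P True True = complex_of_real d"
    "P False True = Complex x y" "P True False = Complex x (- y)"
proof -
  have h: "P j i = cnj (P i j)" for i j using assms herm_def by metis
  have "Im (P b b) = 0" for b using h[of b b] by (simp add: complex_eq_iff)
  hence "P False False = complex_of_real (Re (P False False))" "P True True = complex_of_real (Re (P True True))"
    by (simp_all add: complex_eq_iff)
  moreover have "P False True = Complex (Re (P False True)) (Im (P False True))" by simp
  moreover have "P True False = Complex (Re (P False True)) (- Im (P False True))"
    using h[of False True] by (simp add: complex_eq_iff)
  ultimately show ?thesis using that by blast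
qed

lemma proj_class: assumes h: "herm (P::qop)" and i: "opmult P P = P"
  shows "(P False False + P True True = 1 \<and> norm (mvec P) = 1) \<or> (\<forall>i j. P i j = 0) \<or> P = idop"
proof -
  obtain a d x y where e: "P False False = complex_of_real a" "P True True = complex_of_real d"
    "P False True = Complex x y" "P True False = Complex x (- y)" using herm_decomp[OF h] by blast
  have q: "opmult P P u v = P u v" for u v using i by simp
  have e1: "a*a + (x*x + y*y) = a" using q[of False False] e
    by (simp add: opmult_def sum_bool complex_eq_iff)
  have e2: "d*d + (x*x + y*y) = d" using q[of True True] e
    by (simp add: opmult_def sum_bool complex_eq_iff)
  have e3: "(a + d) * x = x" "(a+d) * y = y" using q[of False True] e
    by (simp_all add: opmult_def sum_bool complex_eq_iff algebra_simps)
  show ?thesis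
  proof (cases "x = 0 \<and> y = 0")
    case False
    hence t: "a + d = 1" using e3 by (metis mult_cancel_right1)
    have "(2*x)^2 + (- 2 * y)^2 + (2*a - 1)^2 = 1" using e1 by (simp add: power2_eq_square algebra_simps)
    hence "norm (mvec P) = 1" unfolding norm3 mvec_def using e by simp
    moreover have "P False False + P True True = 1" using t e by (metis of_real_1 of_real_add)
    ultimately show ?thesis by blast
  next
    case True
    hence "a = 0 \<or> a = 1" "d = 0 \<or> d = 1" using e1 e2 by (auto simp: algebra_simps)
    moreover {
      assume "a = 0" "d = 0"
      hence "\<forall>i j. P i j = 0" using e True by (auto simp: all_bool_eq complex_eq_iff)
    } moreover {
      assume "a = 1" "d = 1"
      hence "P = idop" using e True by (auto simp: all_bool_eq complex_eq_iff idop_def fun_eq_iff)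
    } moreover {
      assume "a + d = 1"
      hence "P False False + P True True = 1" using e by (metis of_real_1 of_real_add)
      moreover have "norm (mvec P) = 1" unfolding norm3 mvec_def using e True \<open>a+d=1\<close> \<open>a = 0 \<or> a = 1\<close>
        by auto
      ultimately have ?thesis by blast
    }
    ultimately show ?thesis by force
  qed
qed
lemma Pr_entries:
  "Pr_elem r m s False False = (1 + (if s then 1 else -1) * complex_of_real r * complex_of_real (m$3)) / 2"
  "Pr_elem r m s True True = (1 - (if s then 1 else -1) * complex_of_real r * complex_of_real (m$3)) / 2"
  "Pr_elem r m s False True = (if s then 1 else -1) * complex_of_real r * Complex (m$1) (- m$2) / 2"
  "Pr_elem r m s True False = (if s then 1 else -1) * complex_of_real r * Complex (m$1) (m$2) / 2"
  unfolding Pr_elem_def idop_def ndotsigma_def sigma_x_def sigma_y_def sigma_z_def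
  by (simp_all add: complex_eq_iff)

lemma qop_eqI: "(\<And>i j. (A::qop) i j = B i j) \<Longrightarrow> A = B" by (simp add: fun_eq_iff)
lemma qop_eq_bool: "((A::qop) = B) \<longleftrightarrow> (A False False = B False False \<and> A False True = B False True \<and> A True False = B True False \<and> A True True = B True True)"
  by (auto simp: fun_eq_iff all_bool_eq)

lemma W_rank1: assumes "herm P" "P False False + P True True = 1"
  shows "Wop r P = (\<lambda>a b. Pr_elem r (mvec P) False a b / 2)"
proof -
  obtain a d x y where e: "P False False = complex_of_real a" "P True True = complex_of_real d"
    "P False True = Complex x y" "P True False = Complex x (- y)" using herm_decomp[OF assms(1)] by blast
  have t: "d = 1 - a" using assms(2) e by (simp add: complex_eq_iff)
  have e2: "P True True = complex_of_real (1 - a)" using e(2) t by simp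
  show ?thesis unfolding qop_eq_bool Wop_entries Pr_entries mvec_def
    by (simp add: e(1) e2 e(3) e(4)) (simp add: complex_eq_iff field_simps)
qed

lemma W_zero: assumes "\<forall>i j. P i j = 0" shows "Wop r P = (\<lambda>a b. 0)"
  unfolding qop_eq_bool Wop_entries using assms by simp

lemma W_id: "Wop r idop = (\<lambda>a b. idop a b / 2)"
  unfolding qop_eq_bool Wop_entries idop_def by (simp add: field_simps)

lemma Pr_neg: "Pr_elem r (-m) s = Pr_elem r m (\<not> s)"
  unfolding qop_eq_bool Pr_entries by (cases s; simp add: complex_eq_iff)

lemma Pr_sum: "Pr_elem r m True a b + Pr_elem r m False a b = idop a b"
  unfolding Pr_elem_def by (simp add: field_simps)

lemma Pr1_herm: "herm (Pr_elem 1 m s)"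
  unfolding herm_def all_bool_eq Pr_entries by (cases s; simp add: complex_eq_iff)

lemma Pr1_tr: "Pr_elem 1 m s False False + Pr_elem 1 m s True True = 1"
  unfolding Pr_entries by (simp add: field_simps)

lemma mvec_Pr1: "mvec (Pr_elem 1 m True) = m" "mvec (Pr_elem 1 m False) = - m"
  unfolding mvec_def Pr_entries by (simp_all add: vec_eq_iff forall_3 field_simps)

lemma Pr1_idem: assumes "norm m = 1" shows "opmult (Pr_elem 1 m s) (Pr_elem 1 m s) = Pr_elem 1 m s"
proof -
  have "sqrt ((m$1)^2 + (m$2)^2 + (m$3)^2) = 1" using assms norm3 by metis
  hence n: "(m$1)^2 + (m$2)^2 + (m$3)^2 = 1" by (metis real_sqrt_eq_1_iff)
  show ?thesis unfolding qop_eq_bool opmult_def sum_bool Pr_entries using n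
    by (cases s; simp add: complex_eq_iff field_simps power2_eq_square; algebra)
qed

lemma mvec_compl: assumes "\<And>i j. P i j + Q i j = idop i j"
  shows "mvec Q = - mvec P"
proof -
  have "Q i j = idop i j - P i j" for i j using assms[of i j] by (simp add: algebra_simps)
  thus ?thesis unfolding mvec_def by (simp add: vec_eq_iff forall_3 idop_def)
qed
lemma sum_two: fixes f :: "nat \<Rightarrow> 'a::comm_monoid_add"
  assumes "a < k" "b < k" "a \<noteq> b" "\<forall>c<k. c \<noteq> a \<longrightarrow> c \<noteq> b \<longrightarrow> f c = 0"
  shows "(\<Sum>c<k. f c) = f a + f b"
proof -
  have s: "{a,b} \<subseteq> {..<k}" using assms by auto
  have z: "\<forall>i\<in>{..<k}-{a,b}. f i = 0" using assms(4) by blast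
  have "(\<Sum>c<k. f c) = (\<Sum>c\<in>{a,b}. f c)" using sum.mono_neutral_right[OF finite_lessThan s z] .
  thus ?thesis using assms(3) by simp
qed

lemma sum_one: fixes f :: "nat \<Rightarrow> 'a::comm_monoid_add"
  assumes "a < k" "\<forall>c<k. c \<noteq> a \<longrightarrow> f c = 0"
  shows "(\<Sum>c<k. f c) = f a"
proof -
  have s: "{a} \<subseteq> {..<k}" using assms by auto
  have z: "\<forall>i\<in>{..<k}-{a}. f i = 0" using assms(2) by blast
  have "(\<Sum>c<k. f c) = (\<Sum>c\<in>{a}. f c)" using sum.mono_neutral_right[OF finite_lessThan s z] .
  thus ?thesis by simp
qed

lemma comb: fixes T Q :: "nat \<Rightarrow> real"
  assumes T: "\<forall>a<k. T a = 0 \<or> T a = 1 \<or> T a = 2" and s: "(\<Sum>a<k. T a) = 2"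
  and Q: "\<forall>a<k. T a \<noteq> 1 \<longrightarrow> Q a = T a / 2"
  and P: "\<forall>a<k. \<forall>b<k. a \<noteq> b \<longrightarrow> T a = 1 \<longrightarrow> T b = 1 \<longrightarrow> (\<forall>c<k. c \<noteq> a \<longrightarrow> c \<noteq> b \<longrightarrow> T c = 0) \<longrightarrow> Q a + Q b = 1"
  shows "(\<Sum>a<k. Q a) = 1"
proof (cases "\<exists>a0<k. T a0 = 2")
  case True
  then obtain a0 where a0: "a0 < k" "T a0 = 2" by blast
  have "(\<Sum>a<k. T a) = T a0 + (\<Sum>a\<in>{..<k} - {a0}. T a)"
    using a0 by (simp add: sum.remove)
  hence z: "(\<Sum>a\<in>{..<k} - {a0}. T a) = 0" using s a0 by simp
  have nn: "\<forall>a\<in>{..<k} - {a0}. 0 \<le> T a" using T by force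
  have "sum T ({..<k}-{a0}) = 0 \<longleftrightarrow> (\<forall>x\<in>{..<k}-{a0}. T x = 0)"
    by (rule sum_nonneg_eq_0_iff) (use nn in auto)
  hence "\<forall>a\<in>{..<k} - {a0}. T a = 0" using z by simp
  hence "\<forall>c<k. c \<noteq> a0 \<longrightarrow> Q c = 0" using Q by auto
  hence "(\<Sum>a<k. Q a) = Q a0" using sum_one[OF a0(1)] by blast
  thus ?thesis using Q a0 by simp
next
  case False
  hence T01: "\<forall>a<k. T a = 0 \<or> T a = 1" using T by auto
  define S where "S = {a. a < k \<and> T a = 1}"
  have "(\<Sum>a<k. T a) = (\<Sum>a<k. if a \<in> S then 1 else 0)"
    by (rule sum.cong) (use T01 S_def in auto)
  also have "\<dots> = real (card S)"
    by (simp add: sum.If_cases S_def Int_def)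
  finally have "card S = 2" using s by simp
  then obtain a b where ab: "a \<noteq> b" "S = {a, b}" by (meson card_2_iff)
  have ak: "a < k" "b < k" "T a = 1" "T b = 1" using ab S_def by auto
  have oth: "\<forall>c<k. c \<noteq> a \<longrightarrow> c \<noteq> b \<longrightarrow> T c = 0" using T01 ab S_def by auto
  hence "\<forall>c<k. c \<noteq> a \<longrightarrow> c \<noteq> b \<longrightarrow> Q c = 0" using Q by auto
  hence "(\<Sum>c<k. Q c) = Q a + Q b" using sum_two[OF ak(1,2) ab(1)] by blast
  thus ?thesis using P ak ab oth by metis
qed
lemma sum_2: "(\<Sum>a<(2::nat). f a) = f 0 + f 1"
  by (simp add: numeral_2_eq_2)

lemma assemblage_W: "assemblage (werner r) M x a = Wop r (M x a)"
  unfolding assemblage_def Wop_def ..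

lemma W_Pr1: assumes "norm m = 1"
  shows "Wop r (Pr_elem 1 m True) = (\<lambda>a b. Pr_elem r m False a b / 2)"
        "Wop r (Pr_elem 1 m False) = (\<lambda>a b. Pr_elem r m True a b / 2)"
  using W_rank1[OF Pr1_herm Pr1_tr] mvec_Pr1 Pr_neg by simp_all

lemma psd_Pr1: "norm m = 1 \<Longrightarrow> psd (Pr_elem 1 m s)"
  by (rule proj_psd[OF Pr1_herm Pr1_idem])

definition FF :: "real^3 \<Rightarrow> nat \<Rightarrow> qop" where
  "FF m = (\<lambda>a. if a = 0 then Pr_elem 1 m True else Pr_elem 1 m False)"

lemma N_le_gamma: "N_sim r \<le> gamma (werner r)"
  unfolding gamma_def
proof (rule INF_greatest)
  fix n assume "n \<in> {n. n \<ge> 1 \<and>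
       (\<forall>(X :: (nat \<times> (nat \<Rightarrow> qop)) set) k M. povm_family X k M \<longrightarrow> has_LHS_model (werner r) X k M n)}"
  hence n1: "n \<ge> 1" and H: "\<And>(X :: (nat \<times> (nat \<Rightarrow> qop)) set) k M. povm_family X k M \<Longrightarrow> has_LHS_model (werner r) X k M n"
    by auto
  define X0 where "X0 = {(2::nat, FF m) | m. norm m = 1}"
  have "povm_family X0 fst snd"
    unfolding povm_family_def X0_def
  proof (clarify)
    fix m :: "real^3" assume m: "norm m = 1"
    show "is_povm (fst (2::nat, FF m)) (snd (2::nat, FF m))"
      unfolding is_povm_def
    proof
      show "\<forall>i<fst (2::nat, FF m). psd (snd (2::nat, FF m) i)"
        using psd_Pr1[OF m] by (simp add: FF_def)
      show "(\<lambda>a b. \<Sum>i<fst (2::nat, FF m). snd (2::nat, FF m) i a b) = idop"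
        by (simp add: sum_2 FF_def Pr_sum fun_eq_iff)
    qed
  qed
  from H[OF this] obtain p \<rho>B q where
    p0: "\<forall>i<n. 0 \<le> p i" and p1: "(\<Sum>i<n. p i) = 1" and st: "\<forall>i<n. is_state (\<rho>B i)"
    and qq: "\<forall>x\<in>X0. \<forall>i<n. (\<forall>a<fst x. 0 \<le> q x a i) \<and> (\<Sum>a<fst x. q x a i) = 1"
    and eq: "\<forall>x\<in>X0. \<forall>a<fst x. assemblage (werner r) snd x a =
            (\<lambda>b b'. \<Sum>i<n. complex_of_real (q x a i * p i) * \<rho>B i b b')"
    unfolding has_LHS_model_def by blast
  have key: "Pr_elem r m s = (\<lambda>b b'. \<Sum>i<n. complex_of_real (2 * q (2, FF m) (if s then 1 else 0) i * p i) * \<rho>B i b b')"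
    if m: "norm m = 1" for m s
  proof -
    have x: "(2::nat, FF m) \<in> X0" using m X0_def by blast
    have "Wop r (FF m (if s then 1 else 0)) = (\<lambda>b b'. \<Sum>i<n. complex_of_real (q (2, FF m) (if s then 1 else 0) i * p i) * \<rho>B i b b')"
    proof -
      have E: "\<forall>a<fst (2::nat, FF m). assemblage (werner r) snd (2::nat, FF m) a =
            (\<lambda>b b'. \<Sum>i<n. complex_of_real (q (2::nat, FF m) a i * p i) * \<rho>B i b b')" using bspec[OF eq x] .
      have "(if s then 1 else 0) < fst (2::nat, FF m)" by simp
      from E[rule_format, OF this] show ?thesis by (simp only: assemblage_W snd_conv)
    qed
    moreover have "Wop r (FF m (if s then 1 else 0)) = (\<lambda>a b. Pr_elem r m s a b / 2)"
      using W_Pr1[OF m] by (cases s) (simp_all add: FF_def)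
    ultimately have eq2: "(\<lambda>a b. Pr_elem r m s a b / 2) = (\<lambda>b b'. \<Sum>i<n. complex_of_real (q (2, FF m) (if s then 1 else 0) i * p i) * \<rho>B i b b')"
      by simp
    have "\<And>b b'. Pr_elem r m s b b' = 2 * (\<Sum>i<n. complex_of_real (q (2, FF m) (if s then 1 else 0) i * p i) * \<rho>B i b b')"
    proof -
      fix b b'
      have "Pr_elem r m s b b' / 2 = (\<Sum>i<n. complex_of_real (q (2, FF m) (if s then 1 else 0) i * p i) * \<rho>B i b b')"
        using fun_cong[OF fun_cong[OF eq2, of b], of b'] by (simp only:)
      thus "Pr_elem r m s b b' = 2 * (\<Sum>i<n. complex_of_real (q (2, FF m) (if s then 1 else 0) i * p i) * \<rho>B i b b')"
        by (simp add: field_simps)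
    qed
    thus ?thesis by (simp add: fun_eq_iff sum_distrib_left algebra_simps)
  qed
  define Pv where "Pv i = (\<lambda>b b'. complex_of_real (2 * p i) * \<rho>B i b b')" for i
  define m0 :: "real^3" where "m0 = vector [1, 0, 0]"
  have m0: "norm m0 = 1" unfolding m0_def norm3 by simp
  have x0: "(2::nat, FF m0) \<in> X0" using m0 X0_def by blast
  have "is_povm n Pv"
    unfolding is_povm_def
  proof
    show "\<forall>i<n. psd (Pv i)"
    proof (intro allI impI)
      fix i assume i: "i < n"
      show "psd (Pv i)" unfolding Pv_def
        by (rule psd_scale) (use st p0 i is_state_def in auto)
    qed
    show "(\<lambda>a b. \<Sum>i<n. Pv i a b) = idop"
    proof (intro ext)
      fix a b
      have "idop a b = Pr_elem r m0 True a b + Pr_elem r m0 False a b" by (simp add: Pr_sum)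
      also have "\<dots> = (\<Sum>i<n. complex_of_real (2 * (q (2, FF m0) 1 i + q (2, FF m0) 0 i) * p i) * \<rho>B i a b)"
        using key[OF m0, of True] key[OF m0, of False]
        by (simp add: sum.distrib[symmetric] algebra_simps)
      also have "\<dots> = (\<Sum>i<n. Pv i a b)"
      proof (rule sum.cong[OF refl])
        fix i assume "i \<in> {..<n}"
        hence "(\<Sum>a<fst (2::nat, FF m0). q (2, FF m0) a i) = 1" using bspec[OF qq x0] by blast
        hence "q (2, FF m0) 1 i + q (2, FF m0) 0 i = 1" by (simp add: sum_2 add.commute)
        thus "complex_of_real (2 * (q (2, FF m0) 1 i + q (2, FF m0) 0 i) * p i) * \<rho>B i a b = Pv i a b"
          by (simp add: Pv_def)
      qed
      finally show "(\<Sum>i<n. Pv i a b) = idop a b" by simp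
    qed
  qed
  moreover have "\<exists>ps :: real^3 \<Rightarrow> bool \<Rightarrow> nat \<Rightarrow> real.
        \<forall>m::real^3. norm m = 1 \<longrightarrow>
          (\<forall>i<n. (\<forall>s. 0 \<le> ps m s i) \<and> ps m True i + ps m False i = 1) \<and>
          (\<forall>s. Pr_elem r m s = (\<lambda>a b. \<Sum>i<n. complex_of_real (ps m s i) * Pv i a b))"
  proof (rule exI[where x="\<lambda>m s i. q (2, FF m) (if s then 1 else 0) i"], intro allI impI, rule conjI)
    fix m :: "real^3" assume m: "norm m = 1"
    have x: "(2::nat, FF m) \<in> X0" using m X0_def by blast
    show "\<forall>i<n. (\<forall>s. 0 \<le> q (2, FF m) (if s then 1 else 0) i) \<and>
          q (2, FF m) (if True then 1 else 0) i + q (2, FF m) (if False then 1 else 0) i = 1"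
    proof (intro allI impI conjI)
      fix i s assume i: "i < n"
      have h: "(\<forall>a<fst (2::nat, FF m). 0 \<le> q (2, FF m) a i) \<and> (\<Sum>a<fst (2::nat, FF m). q (2, FF m) a i) = 1"
        using bspec[OF qq x] i by blast
      have lt: "(if s then 1 else 0) < fst (2::nat, FF m)" by simp
      show "0 \<le> q (2, FF m) (if s then 1 else 0) i" using h[THEN conjunct1, rule_format, OF lt] .
    next
      fix i assume i: "i < n"
      have h: "(\<Sum>a<fst (2::nat, FF m). q (2, FF m) a i) = 1"
        using bspec[OF qq x] i by blast
      thus "q (2, FF m) (if True then 1 else 0) i + q (2, FF m) (if False then 1 else 0) i = 1"
        by (simp add: sum_2 add.commute)
    qed
    show "\<forall>s. Pr_elem r m s = (\<lambda>a b. \<Sum>i<n. complex_of_real (q (2, FF m) (if s then 1 else 0) i) * Pv i a b)"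
      using key[OF m] by (simp add: Pv_def algebra_simps)
  qed
  ultimately have "simulates_Pr r n Pv" unfolding simulates_Pr_def by blast
  hence "n \<in> {n. n \<ge> 1 \<and> (\<exists>Pv. simulates_Pr r n Pv)}" using n1 by blast
  thus "N_sim r \<le> enat n" unfolding N_sim_def by (rule INF_lower)
qed
lemma N_attained: assumes "N_sim r \<noteq> \<infinity>"
  shows "\<exists>n Pv. simulates_Pr r n Pv \<and> N_sim r = enat n"
proof -
  define S where "S = {n. n \<ge> 1 \<and> (\<exists>Pv. simulates_Pr r n Pv)}"
  have NS: "N_sim r = (INF n\<in>S. enat n)" unfolding N_sim_def S_def ..
  have "S \<noteq> {}"
  proof
    assume "S = {}"
    hence "N_sim r = \<infinity>" using NS by (simp add: top_enat_def)
    thus False using assms by simp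
  qed
  then obtain n1 where "n1 \<in> S" by blast
  define n0 where "n0 = (LEAST n. n \<in> S)"
  have n0S: "n0 \<in> S" unfolding n0_def using \<open>n1 \<in> S\<close> by (rule LeastI)
  have "(INF n\<in>S. enat n) = enat n0"
  proof (rule antisym)
    show "(INF n\<in>S. enat n) \<le> enat n0" using n0S by (rule INF_lower)
    show "enat n0 \<le> (INF n\<in>S. enat n)"
      by (rule INF_greatest) (simp add: n0_def Least_le)
  qed
  moreover have "\<exists>Pv. simulates_Pr r n0 Pv" using n0S unfolding S_def by simp
  ultimately show ?thesis using NS by auto
qed

definition pos3 :: "real^3 \<Rightarrow> bool" where
  "pos3 m \<longleftrightarrow> m$1 > 0 \<or> (m$1 = 0 \<and> (m$2 > 0 \<or> (m$2 = 0 \<and> m$3 > 0)))"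

lemma pos3_neg: "pos3 m \<Longrightarrow> \<not> pos3 (-m)" unfolding pos3_def by auto
lemma pos3_or: "norm m = 1 \<Longrightarrow> pos3 m \<or> pos3 (-m)"
  unfolding pos3_def norm3 by (cases "m$1 = 0"; cases "m$2 = 0"; cases "m$3 = 0"; auto)

lemma tr_real: assumes "psd (A::qop)"
  shows "A False False + A True True = complex_of_real (Re (A False False + A True True))"
  using psd_diag(1)[OF assms, of False] psd_diag(1)[OF assms, of True]
  by (simp add: complex_is_Real_iff complex_eq_iff)

lemma psd_idop: "psd (idop :: qop)"
proof (rule proj_psd)
  show "herm idop" by (simp add: herm_def idop_def)
  show "opmult idop idop = (idop::qop)" by (simp add: opmult_def idop_def fun_eq_iff sum_bool)
qed

lemma part1: assumes sim: "simulates_Pr r n Pv" and pf: "projective_family X k M"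
  shows "has_LHS_model (werner r) X k M n"
proof -
  have Pvp: "is_povm n Pv" using sim simulates_Pr_def by blast
  have Pvpsd: "\<And>i. i < n \<Longrightarrow> psd (Pv i)" using Pvp is_povm_def by blast
  have Pvsum: "\<And>a b. (\<Sum>i<n. Pv i a b) = idop a b" using Pvp unfolding is_povm_def by metis
  obtain ps :: "real^3 \<Rightarrow> bool \<Rightarrow> nat \<Rightarrow> real" where
    ps: "\<And>m. norm m = 1 \<Longrightarrow> (\<forall>i<n. (\<forall>s. 0 \<le> ps m s i) \<and> ps m True i + ps m False i = 1) \<and>
          (\<forall>s. Pr_elem r m s = (\<lambda>a b. \<Sum>i<n. complex_of_real (ps m s i) * Pv i a b))"
    using sim unfolding simulates_Pr_def by blast
  define c where "c m i = (if pos3 m then ps m False i else ps (-m) True i)" for m i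
  have nm: "norm (-m) = 1" if "norm m = 1" for m :: "real^3" using that by simp
  have C1: "0 \<le> c m i" if "norm m = 1" "i < n" for m i
    using ps[OF that(1)] ps[OF nm[OF that(1)]] that(2) unfolding c_def by auto
  have C2: "c m i + c (-m) i = 1" if "norm m = 1" "i < n" for m i
  proof (cases "pos3 m")
    case True
    hence "\<not> pos3 (-m)" by (rule pos3_neg)
    thus ?thesis using True ps[OF that(1)] that(2) unfolding c_def by (simp add: add.commute)
  next
    case False
    hence "pos3 (-m)" using pos3_or[OF that(1)] by blast
    thus ?thesis using False ps[OF nm[OF that(1)]] that(2) unfolding c_def by (simp add: add.commute)
  qed
  have C3: "Pr_elem r m False = (\<lambda>a b. \<Sum>i<n. complex_of_real (c m i) * Pv i a b)" if "norm m = 1" for m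
  proof (cases "pos3 m")
    case True
    thus ?thesis using ps[OF that] unfolding c_def by simp
  next
    case False
    have "Pr_elem r m False = Pr_elem r (-m) True" using Pr_neg[of r m True] by simp
    thus ?thesis using False ps[OF nm[OF that]] unfolding c_def by simp
  qed
  define pp where "pp i = Re (Pv i False False + Pv i True True) / 2" for i
  define \<rho>B where "\<rho>B i = (if pp i = 0 then (\<lambda>a b. complex_of_real (1/2) * idop a b)
       else (\<lambda>a b. complex_of_real (1 / (2 * pp i)) * Pv i a b))" for i
  have trPv: "Pv i False False + Pv i True True = complex_of_real (2 * pp i)" if "i < n" for i
    using tr_real[OF Pvpsd[OF that]] unfolding pp_def by simp
  have pp0: "0 \<le> pp i" if "i < n" for i
    using psd_diag(2)[OF Pvpsd[OF that], of False] psd_diag(2)[OF Pvpsd[OF that], of True]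
    unfolding pp_def by simp
  have keyP: "complex_of_real (pp i) * \<rho>B i a b = Pv i a b / 2" if "i < n" for i a b
  proof (cases "pp i = 0")
    case True
    hence "Pv i a b = 0" using psd_trace0[OF Pvpsd[OF that]] trPv[OF that] by simp
    thus ?thesis using True by simp
  next
    case False
    thus ?thesis unfolding \<rho>B_def by (simp add: field_simps)
  qed
  have pp1: "(\<Sum>i<n. pp i) = 1"
  proof -
    have "(\<Sum>i<n. complex_of_real (2 * pp i)) = (\<Sum>i<n. Pv i False False + Pv i True True)"
      using trPv by simp
    also have "\<dots> = 2" by (simp add: sum.distrib Pvsum idop_def)
    finally have "complex_of_real (\<Sum>i<n. 2 * pp i) = 2" by simp
    hence "complex_of_real (\<Sum>i<n. 2 * pp i) = complex_of_real 2" by simp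
    hence "(\<Sum>i<n. 2 * pp i) = 2" by (simp only: of_real_eq_iff)
    thus ?thesis by (simp add: sum_distrib_left[symmetric])
  qed
  have stB: "is_state (\<rho>B i)" if "i < n" for i
  proof (cases "pp i = 0")
    case True
    thus ?thesis unfolding is_state_def \<rho>B_def
      using psd_scale[OF psd_idop, of "1/2"] by (simp add: optrace_def sum_bool idop_def)
  next
    case False
    hence "0 < pp i" using pp0[OF that] by simp
    hence "psd (\<rho>B i)" unfolding \<rho>B_def using psd_scale[OF Pvpsd[OF that], of "1/(2*pp i)"] False by simp
    moreover have "optrace (\<rho>B i) = 1"
    proof -
      have "optrace (\<rho>B i) = complex_of_real (1 / (2 * pp i)) * (Pv i False False + Pv i True True)"
        unfolding optrace_def \<rho>B_def using False by (simp add: sum_bool algebra_simps add_divide_distrib)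
      also have "\<dots> = 1" using trPv[OF that] False by (simp flip: of_real_mult)
      finally show ?thesis .
    qed
    ultimately show ?thesis unfolding is_state_def by blast
  qed
  define tt where "tt x a = Re (M x a False False + M x a True True)" for x a
  define q where "q x a i = (if tt x a = 1 then c (mvec (M x a)) i else tt x a / 2)" for x a i
  have cls: "(tt x a = 1 \<and> M x a False False + M x a True True = 1 \<and> herm (M x a) \<and> norm (mvec (M x a)) = 1)
        \<or> (tt x a = 0 \<and> (\<forall>u v. M x a u v = 0)) \<or> (tt x a = 2 \<and> M x a = idop)"
    if "x \<in> X" "a < k x" for x a
  proof -
    have "psd (M x a)" using pf that unfolding projective_family_def povm_family_def is_povm_def by blast
    hence h: "herm (M x a)" by (rule psd_herm)
    have "opmult (M x a) (M x a) = M x a" using pf that unfolding projective_family_def by blast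
    from proj_class[OF h this] consider
        (A) "M x a False False + M x a True True = 1" "norm (mvec (M x a)) = 1"
      | (B) "\<forall>i j. M x a i j = 0" | (C) "M x a = idop" by blast
    thus ?thesis
    proof cases
      case A
      have "tt x a = Re 1" unfolding tt_def using A(1) by (simp only:)
      thus ?thesis using A h by simp
    next
      case B
      thus ?thesis unfolding tt_def by simp
    next
      case C
      thus ?thesis unfolding tt_def by (simp add: idop_def)
    qed
  qed
  show ?thesis unfolding has_LHS_model_def
  proof (intro exI conjI)
    show "\<forall>i<n. 0 \<le> pp i" using pp0 by blast
    show "(\<Sum>i<n. pp i) = 1" by (rule pp1)
    show "\<forall>i<n. is_state (\<rho>B i)" using stB by blast
    show "\<forall>x\<in>X. \<forall>i<n. (\<forall>a<k x. 0 \<le> q x a i) \<and> (\<Sum>a<k x. q x a i) = 1"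
    proof (intro ballI allI impI conjI)
      fix x i assume x: "x \<in> X" and i: "i < n"
      show "0 \<le> q x a i" if "a < k x" for a
        using cls[OF x that] C1[OF _ i] unfolding q_def by auto
      have Ms: "(\<Sum>a<k x. M x a u v) = idop u v" for u v
        using pf x unfolding projective_family_def povm_family_def is_povm_def by metis
      show "(\<Sum>a<k x. q x a i) = 1"
      proof (rule comb[where T="tt x"])
        show "\<forall>a<k x. tt x a = 0 \<or> tt x a = 1 \<or> tt x a = 2" using cls[OF x] by blast
        have "(\<Sum>a<k x. tt x a) = Re (\<Sum>a<k x. M x a False False + M x a True True)"
          unfolding tt_def by simp
        also have "\<dots> = 2" by (simp add: sum.distrib Ms idop_def)
        finally show "(\<Sum>a<k x. tt x a) = 2" .
        show "\<forall>a<k x. tt x a \<noteq> 1 \<longrightarrow> q x a i = tt x a / 2" unfolding q_def by simp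
        show "\<forall>a<k x. \<forall>b<k x. a \<noteq> b \<longrightarrow> tt x a = 1 \<longrightarrow> tt x b = 1 \<longrightarrow>
            (\<forall>c<k x. c \<noteq> a \<longrightarrow> c \<noteq> b \<longrightarrow> tt x c = 0) \<longrightarrow> q x a i + q x b i = 1"
        proof (intro allI impI)
          fix a b assume a: "a < k x" and b: "b < k x" and ab: "a \<noteq> b" and ta: "tt x a = 1" and tb: "tt x b = 1"
            and oth: "\<forall>c<k x. c \<noteq> a \<longrightarrow> c \<noteq> b \<longrightarrow> tt x c = 0"
          have z: "\<forall>c<k x. c \<noteq> a \<longrightarrow> c \<noteq> b \<longrightarrow> M x c u v = 0" for u v
            using oth cls[OF x] by fastforce
          have "M x a u v + M x b u v = idop u v" for u v
            using Ms[of u v] sum_two[OF a b ab z[of u v]] by simp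
          hence mb: "mvec (M x b) = - mvec (M x a)" by (rule mvec_compl)
          have na: "norm (mvec (M x a)) = 1" using cls[OF x a] ta by auto
          show "q x a i + q x b i = 1" unfolding q_def using ta tb mb C2[OF na i] by simp
        qed
      qed
    qed
    show "\<forall>x\<in>X. \<forall>a<k x. assemblage (werner r) M x a =
            (\<lambda>b b'. \<Sum>i<n. complex_of_real (q x a i * pp i) * \<rho>B i b b')"
    proof (intro ballI allI impI)
      fix x a assume x: "x \<in> X" and a: "a < k x"
      have R: "(\<lambda>b b'. \<Sum>i<n. complex_of_real (q x a i * pp i) * \<rho>B i b b')
             = (\<lambda>b b'. (\<Sum>i<n. complex_of_real (q x a i) * Pv i b b') / 2)"
      proof (intro ext)
        fix b b'
        have "(\<Sum>i<n. complex_of_real (q x a i * pp i) * \<rho>B i b b') = (\<Sum>i<n. complex_of_real (q x a i) * Pv i b b' / 2)"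
        proof (rule sum.cong[OF refl])
          fix i assume "i \<in> {..<n}"
          hence "i < n" by simp
          thus "complex_of_real (q x a i * pp i) * \<rho>B i b b' = complex_of_real (q x a i) * Pv i b b' / 2"
            using keyP[of i b b'] by (simp add: mult.assoc)
        qed
        thus "(\<Sum>i<n. complex_of_real (q x a i * pp i) * \<rho>B i b b') = (\<Sum>i<n. complex_of_real (q x a i) * Pv i b b') / 2"
          by (simp add: sum_divide_distrib)
      qed
      show "assemblage (werner r) M x a = (\<lambda>b b'. \<Sum>i<n. complex_of_real (q x a i * pp i) * \<rho>B i b b')"
        unfolding R assemblage_W
      proof -
        consider (A) "tt x a = 1" "M x a False False + M x a True True = 1" "herm (M x a)" "norm (mvec (M x a)) = 1"
          | (B) "tt x a = 0" "\<forall>u v. M x a u v = 0" | (C) "tt x a = 2" "M x a = idop"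
          using cls[OF x a] by blast
        thus "Wop r (M x a) = (\<lambda>b b'. (\<Sum>i<n. complex_of_real (q x a i) * Pv i b b') / 2)"
        proof cases
          case A
          show ?thesis unfolding W_rank1[OF A(3) A(2)] C3[OF A(4)] q_def using A(1) by simp
        next
          case B
          show ?thesis unfolding W_zero[OF B(2)] q_def using B(1) by simp
        next
          case C
          show ?thesis using C by (simp add: q_def Pvsum W_id)
        qed
      qed
    qed
  qed
qed

theorem proposition1:
  fixes r :: real
  assumes "0 \<le> r" and "r \<le> 1 / 2"
  shows "(\<forall>(X :: 'x set) (k :: 'x \<Rightarrow> nat) (M :: 'x \<Rightarrow> nat \<Rightarrow> qop).
            projective_family X k M \<and> N_sim r \<noteq> \<infinity> \<longrightarrow>
              has_LHS_model (werner r) X k M (the_enat (N_sim r)))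
         \<and> N_sim r \<le> gamma (werner r)"
proof (intro conjI allI impI)
  fix X :: "'x set" and k M assume h: "projective_family X k M \<and> N_sim r \<noteq> \<infinity>"
  then obtain n Pv where "simulates_Pr r n Pv" "N_sim r = enat n" using N_attained by blast
  thus "has_LHS_model (werner r) X k M (the_enat (N_sim r))" using part1 h by simp
next
  show "N_sim r \<le> gamma (werner r)" by (rule N_le_gamma)
qed
end
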